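(* Let $n\ge1$ and let $\alpha=(\alpha_1,\dots,\alpha_k)$ be a composition of $n$ (positive integers summing to $n$), and work over the alphabet $A=\{a_1<a_2<\dots<a_k\}$. Then $$|\{w\in\mathcal{W}^o_n:\operatorname{wt}(w)=x_1^{\alpha_1}\cdots x_k^{\alpha_k}\}|=|\{w\in\mathcal{W}^e_n:\operatorname{wt}(w)=x_1^{\alpha_1}\cdots x_k^{\alpha_k}\}|.$$
   Context: Words are finite sequences of letters from the totally ordered alphabet $A=\{a_1<\dots<a_k\}$; $\mathcal{W}_n$ is the set of words of length $n$. Words are compared in lexicographic order (a proper prefix is smaller than the word). Two words $u,v$ are conjugate if $u=rs$ and $v=sr$ for some words $r,s$. A nonempty word is primitive if it is not of the form $r^j$ with $j\ge2$. A Lyndon word is a primitive word strictly smaller than all its other conjugates (equivalently, a nonempty word strictly smaller than each of its proper nonempty suffixes). Every word $w$ has a unique Lyndon factorization $w=\ell_1\ell_2\cdots\ell_m$ with each $\ell_i$ a Lyndon word and $\ell_1\ge\ell_2\ge\dots\ge\ell_m$; the $\ell_i$ are the Lyndon factors of $w$. The weight of a word is $\operatorname{wt}(w)=x_1^{\beta_1}\cdots x_k^{\beta_k}$ where $\beta_i$ is the number of occurrences of $a_i$ in $w$. $\mathcal{W}^o_n$ is the set of words in $\mathcal{W}_n$ all of whose Lyndon factors have odd length and are pairwise distinct. $\mathcal{W}^e_n$ is the set of words in $\mathcal{W}_n$ all of whose Lyndon factors have even length, except possibly for one factor of length one. *)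

theory Defs
  imports Main
begin

text \<open>Letters a_1 < ... < a_k are encoded as natural numbers 0 < ... < k-1;
  words are lists of naturals.\<close>

definition lex_less :: "nat list \<Rightarrow> nat list \<Rightarrow> bool" where
  "lex_less u v \<longleftrightarrow> (u, v) \<in> lexord {(a, b). a < b}"

definition lex_le :: "nat list \<Rightarrow> nat list \<Rightarrow> bool" where
  "lex_le u v \<longleftrightarrow> u = v \<or> lex_less u v"

definition lyndon :: "nat list \<Rightarrow> bool" where
  "lyndon w \<longleftrightarrow> w \<noteq> [] \<and> (\<forall>i. 0 < i \<and> i < length w \<longrightarrow> lex_less w (drop i w))"

definition is_lyndon_factorization :: "nat list list \<Rightarrow> nat list \<Rightarrow> bool" where
  "is_lyndon_factorization ls w \<longleftrightarrow>
     concat ls = w \<and> (\<forall>l\<in>set ls. lyndon l) \<and> sorted_wrt (\<lambda>x y. lex_le y x) ls"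

definition lyndon_factors :: "nat list \<Rightarrow> nat list list" where
  "lyndon_factors w = (THE ls. is_lyndon_factorization ls w)"

definition words :: "nat \<Rightarrow> nat \<Rightarrow> nat list set" where
  "words k n = {w. length w = n \<and> set w \<subseteq> {..<k}}"

definition words_o :: "nat \<Rightarrow> nat \<Rightarrow> nat list set" where
  "words_o k n = {w \<in> words k n.
     (\<forall>l\<in>set (lyndon_factors w). odd (length l)) \<and> distinct (lyndon_factors w)}"

definition words_e :: "nat \<Rightarrow> nat \<Rightarrow> nat list set" where
  "words_e k n = {w \<in> words k n.
     (\<forall>l\<in>set (lyndon_factors w). odd (length l) \<longrightarrow> length l = 1) \<and>
     length (filter (\<lambda>l. odd (length l)) (lyndon_factors w)) \<le> 1}"

text \<open>wt(w) = x_1^{alpha_1} ... x_k^{alpha_k}: letter i occurs alpha!i times.\<close>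
definition has_weight :: "nat list \<Rightarrow> nat list \<Rightarrow> bool" where
  "has_weight \<alpha> w \<longleftrightarrow> (\<forall>i<length \<alpha>. count_list w i = \<alpha> ! i)"

end

theory Submission
  imports Defs "HOL-Library.List_Lexorder" "HOL-Library.Multiset"
begin


lemma lex_less_eq[simp]: "lex_less u v = (u < v)"
  by (simp add: lex_less_def list_less_def)

lemma lex_le_eq[simp]: "lex_le u v = (u \<le> v)"
  by (auto simp add: lex_le_def list_le_def)

lemma prefix_le: "(u::nat list) \<le> u @ v"
proof (cases v)
  case Nil then show ?thesis by simp
next
  case (Cons b z) then show ?thesis
    by (simp add: list_le_def list_less_def lexord_append_rightI)
qed

lemma suf_less: "(u::nat list) < w \<Longrightarrow> length w \<le> length u \<Longrightarrow> u @ v < w @ z"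
  unfolding list_less_def by (rule lexord_sufI)

lemma pref_less_iff: "((x::nat list) @ u < x @ v) = (u < v)"
  unfolding list_less_def by (simp add: irrefl_def)

lemma lyndon_drop: "lyndon w \<Longrightarrow> 0 < i \<Longrightarrow> i < length w \<Longrightarrow> w < drop i w"
  by (simp add: lyndon_def)

lemma uv_less_v:
  assumes u: "lyndon u" and v: "lyndon v" and uv: "u < v"
  shows "u @ v < v"
proof -
  have "(u, v) \<in> lexord {(a, b). a < b}" using uv by (simp add: list_less_def)
  then consider (p) y where "y \<noteq> []" "v = u @ y"
    | (d) p a b r s where "a < b" "u = p @ a # r" "v = p @ b # s"
    unfolding lexord_def by auto
  then show ?thesis
  proof cases
    case p
    have "0 < length u" using u by (simp add: lyndon_def)
    then have "v < drop (length u) v" using v p by (intro lyndon_drop) auto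
    then have "v < y" using p by simp
    then show ?thesis using p by (simp add: pref_less_iff)
  next
    case d
    have "u @ v = p @ a # (r @ v)" using d by simp
    then show ?thesis using d
      by (simp add: list_less_def lexord_append_left_rightI)
  qed
qed

lemma lyndon_app:
  assumes u: "lyndon u" and v: "lyndon v" and uv: "u < v"
  shows "lyndon (u @ v)"
  unfolding lyndon_def lex_less_eq
proof (intro conjI allI impI)
  show "u @ v \<noteq> []" using u by (simp add: lyndon_def)
  fix i assume i: "0 < i \<and> i < length (u @ v)"
  have uvv: "u @ v < v" using uv_less_v[OF assms] .
  consider "i < length u" | "i = length u" | "length u < i" by linarith
  then show "u @ v < drop i (u @ v)"
  proof cases
    case 1
    then have "u < drop i u" using u i by (intro lyndon_drop) auto
    then have "u @ v < drop i u @ v" by (rule suf_less) simp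
    then show ?thesis using 1 by simp
  next
    case 2 then show ?thesis using uvv by simp
  next
    case 3
    then have "v < drop (i - length u) v" using v i by (intro lyndon_drop) auto
    then show ?thesis using 3 uvv by simp
  qed
qed

lemma lyndon_single: "lyndon [a]"
  by (auto simp add: lyndon_def)

definition isf :: "nat list list \<Rightarrow> nat list \<Rightarrow> bool" where
  "isf ls w \<longleftrightarrow> concat ls = w \<and> (\<forall>l\<in>set ls. lyndon l) \<and> sorted_wrt (\<lambda>x y. y \<le> x) ls"

lemma isf_eq: "is_lyndon_factorization = isf"
  by (intro ext) (simp add: is_lyndon_factorization_def isf_def)

lemma merge_ex:
  "lyndon x \<Longrightarrow> (\<forall>l\<in>set ls. lyndon l) \<Longrightarrow> sorted_wrt (\<lambda>a b. b \<le> a) ls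
   \<Longrightarrow> \<exists>ls'. isf ls' (x @ concat ls)"
proof (induction ls arbitrary: x)
  case Nil
  then show ?case by (intro exI[of _ "[x]"]) (simp add: isf_def)
next
  case (Cons l ls)
  show ?case
  proof (cases "l \<le> x")
    case True
    then show ?thesis using Cons.prems
      by (intro exI[of _ "x # l # ls"]) (auto simp add: isf_def intro: order_trans)
  next
    case False
    then have "x < l" by simp
    then have "lyndon (x @ l)" using Cons.prems by (intro lyndon_app) auto
    from Cons.IH[OF this] Cons.prems show ?thesis by auto
  qed
qed

lemma fact_ex: "\<exists>ls. isf ls w"
proof (induction w)
  case Nil then show ?case by (intro exI[of _ "[]"]) (simp add: isf_def)
next
  case (Cons a w)
  then obtain ls where "isf ls w" by blast
  then show ?case using merge_ex[OF lyndon_single[of a], of ls] by (auto simp: isf_def)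
qed

lemma suffix_le:
  "q \<noteq> [] \<Longrightarrow> concat ls = q @ r \<Longrightarrow> \<forall>x\<in>set ls. x \<le> (m::nat list)
   \<Longrightarrow> \<exists>t p. t \<noteq> [] \<and> q = p @ t \<and> t \<le> m"
proof (induction ls arbitrary: q)
  case Nil then show ?case by simp
next
  case (Cons x xs)
  show ?case
  proof (cases "length q \<le> length x")
    case True
    with Cons.prems(2) obtain s where "x = q @ s"
      by (auto simp: append_eq_append_conv2)
    then have "q \<le> x" by (simp add: prefix_le)
    then show ?thesis using Cons.prems by (intro exI[of _ q] exI[of _ "[]"]) (auto intro: order_trans)
  next
    case False
    with Cons.prems(2) obtain q' where q': "q = x @ q'" "concat xs = q' @ r"
      by (auto simp: append_eq_append_conv2)
    then have "q' \<noteq> []" using False by auto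
    from Cons.IH[OF this q'(2)] Cons.prems obtain t p where "t \<noteq> []" "q' = p @ t" "t \<le> m" by auto
    then show ?thesis using q' by (intro exI[of _ t] exI[of _ "x @ p"]) auto
  qed
qed

lemma first_longest:
  assumes f: "isf (l # ls) w" and p: "lyndon p" and w: "w = p @ r"
  shows "length p \<le> length l"
proof (rule ccontr)
  assume "\<not> length p \<le> length l"
  then have lt: "length l < length p" by simp
  have w2: "w = l @ concat ls" using f by (simp add: isf_def)
  obtain q where q: "p = l @ q" "concat ls = q @ r"
    using w w2 lt by (auto simp: append_eq_append_conv2)
  have "q \<noteq> []" using q lt by auto
  moreover have "\<forall>x\<in>set ls. x \<le> l" using f by (simp add: isf_def)
  ultimately obtain t p' where t: "t \<noteq> []" "q = p' @ t" "t \<le> l"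
    using suffix_le[OF _ q(2)] by blast
  have ln: "l \<noteq> []" using f by (simp add: isf_def lyndon_def)
  have "p < drop (length l + length p') p"
    using p t ln q by (intro lyndon_drop) auto
  then have "p < t" using q t by simp
  also have "t \<le> l" by fact
  also have "l \<le> p" using q by (simp add: prefix_le)
  finally show False by simp
qed

lemma fact_unique: "isf ls w \<Longrightarrow> isf ls' w \<Longrightarrow> ls = ls'"
proof (induction ls arbitrary: ls' w)
  case Nil
  then have "w = []" by (simp add: isf_def)
  then show ?case using Nil.prems(2)
    by (cases ls') (auto simp: isf_def lyndon_def)
next
  case (Cons l ls)
  have ln: "l \<noteq> []" using Cons.prems by (simp add: isf_def lyndon_def)
  then have "w \<noteq> []" using Cons.prems by (auto simp: isf_def)
  then obtain l' xs' where ls': "ls' = l' # xs'" using Cons.prems(2)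
    by (cases ls') (auto simp: isf_def)
  have w1: "w = l @ concat ls" and w2: "w = l' @ concat xs'"
    using Cons.prems ls' by (auto simp: isf_def)
  have "length l' \<le> length l"
    using first_longest[OF Cons.prems(1), of l' "concat xs'"] w2 Cons.prems(2) ls'
    by (auto simp: isf_def)
  moreover have "length l \<le> length l'"
    using first_longest[of l' xs' w l "concat ls"] w1 Cons.prems ls'
    by (auto simp: isf_def)
  ultimately have "length l = length l'" by simp
  then have "l = l'" using w1 w2 by (metis append_eq_append_conv)
  then have "concat ls = concat xs'" using w1 w2 by simp
  then have "ls = xs'" using Cons.prems ls' \<open>l = l'\<close>
    by (intro Cons.IH[of "concat ls"]) (auto simp: isf_def)
  then show ?case using ls' \<open>l = l'\<close> by simp
qed

lemma lf_isf: "isf (lyndon_factors w) w"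
proof -
  obtain ls where "isf ls w" using fact_ex by blast
  then have "\<exists>!ls. isf ls w" using fact_unique by blast
  then show ?thesis unfolding lyndon_factors_def isf_eq by (rule theI')
qed

lemma lf_unique: "isf ls w \<Longrightarrow> lyndon_factors w = ls"
  using fact_unique lf_isf by blast



definition wt :: "nat list multiset \<Rightarrow> nat multiset" where
  "wt M = sum_mset (image_mset mset M)"

definition LM :: "nat list multiset \<Rightarrow> bool" where
  "LM M \<longleftrightarrow> (\<forall>l\<in>#M. lyndon l)"

definition fm :: "nat list \<Rightarrow> nat list multiset" where
  "fm w = mset (lyndon_factors w)"

definition mk :: "nat list multiset \<Rightarrow> nat list" where
  "mk M = concat (rev (sorted_list_of_multiset M))"

definition FS :: "(nat list multiset \<Rightarrow> bool) \<Rightarrow> nat multiset \<Rightarrow> nat list multiset set" where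
  "FS P A = {M. LM M \<and> wt M = A \<and> P M}"

lemma wt_add[simp]: "wt (M + N) = wt M + wt N"
  by (simp add: wt_def)

lemma wt_single[simp]: "wt {#l#} = mset l"
  by (simp add: wt_def)

lemma wt_empty[simp]: "wt {#} = {#}"
  by (simp add: wt_def)

lemma wt_mset_list: "wt (mset L) = mset (concat L)"
  by (simp add: wt_def mset_concat sum_mset_sum_list[symmetric])

lemma LM_fm: "LM (fm w)"
  using lf_isf[of w] by (simp add: LM_def fm_def isf_def)

lemma wt_fm: "wt (fm w) = mset w"
  using lf_isf[of w] by (simp add: fm_def wt_mset_list isf_def)

lemma isf_mk: "LM M \<Longrightarrow> isf (rev (sorted_list_of_multiset M)) (mk M)"
  by (simp add: isf_def mk_def LM_def sorted_wrt_rev)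

lemma fm_mk: "LM M \<Longrightarrow> fm (mk M) = M"
  using lf_unique[OF isf_mk] by (simp add: fm_def)

lemma mset_mk: "LM M \<Longrightarrow> mset (mk M) = wt M"
  using wt_fm[of "mk M"] fm_mk by simp

lemma mk_fm: "mk (fm w) = w"
proof -
  have i: "isf (lyndon_factors w) w" by (rule lf_isf)
  let ?L = "lyndon_factors w"
  have "sorted (rev ?L)" using i by (simp add: isf_def sorted_wrt_rev)
  then have "sort (rev ?L) = rev ?L" by (rule sorted_sort_id)
  then have "sorted_list_of_multiset (fm w) = rev ?L"
    by (metis fm_def mset_rev sorted_list_of_multiset_mset)
  then show ?thesis using i by (simp add: mk_def isf_def)
qed

lemma bij_fm: "bij_betw fm {w. mset w = A \<and> P (fm w)} (FS P A)"
  by (rule bij_betw_byWitness[where f' = mk])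
     (auto simp: FS_def mk_fm fm_mk LM_fm wt_fm mset_mk)

lemma card_FS: "card {w. mset w = A \<and> P (fm w)} = card (FS P A)"
  using bij_betw_same_card[OF bij_fm] .

lemma finite_mset_eq: "finite {w :: nat list. mset w \<subseteq># A}"
proof -
  have "{w :: nat list. mset w \<subseteq># A} \<subseteq> {w. set w \<subseteq> set_mset A \<and> length w \<le> size A}"
    by (auto dest: mset_subset_eqD size_mset_mono)
  moreover have "finite {w. set w \<subseteq> set_mset A \<and> length w \<le> size A}"
    by (rule finite_lists_length_le) simp
  ultimately show ?thesis by (rule finite_subset)
qed

lemma finite_FS_le: "finite {M. LM M \<and> wt M \<subseteq># A}"
proof -
  have "{M. LM M \<and> wt M \<subseteq># A} \<subseteq> fm ` {w. mset w \<subseteq># A}"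
  proof
    fix M assume "M \<in> {M. LM M \<and> wt M \<subseteq># A}"
    then show "M \<in> fm ` {w. mset w \<subseteq># A}"
      by (intro image_eqI[of _ _ "mk M"]) (auto simp: fm_mk mset_mk)
  qed
  then show ?thesis by (rule finite_surj[OF finite_mset_eq])
qed

lemma finite_FS: "finite (FS P A)"
  by (rule finite_subset[OF _ finite_FS_le[of A]]) (auto simp: FS_def)



definition PO :: "nat list multiset \<Rightarrow> bool" where
  "PO M \<longleftrightarrow> (\<forall>l\<in>#M. odd (length l)) \<and> (\<forall>l. count M l \<le> 1)"
definition PV :: "nat list multiset \<Rightarrow> bool" where
  "PV M \<longleftrightarrow> (\<forall>l\<in>#M. even (length l))"
definition PE :: "nat list multiset \<Rightarrow> bool" where
  "PE M \<longleftrightarrow> (\<forall>l\<in>#M. odd (length l) \<longrightarrow> length l = 1) \<and>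
     size (filter_mset (\<lambda>l. odd (length l)) M) \<le> 1"

definition Q :: "nat multiset \<Rightarrow> (nat list multiset \<times> nat list) set" where
  "Q A = {(S,u). LM S \<and> PO S \<and> wt S + mset u = A}"
definition R :: "nat multiset \<Rightarrow> (nat list multiset \<times> nat list multiset) set" where
  "R A = {(S,M). LM S \<and> PO S \<and> LM M \<and> wt S + wt M = A}"
definition G :: "nat multiset \<Rightarrow> int" where
  "G A = (\<Sum>(S,u)\<in>Q A. (-1::int) ^ length u)"

lemma LM_add[simp]: "LM (M + N) = (LM M \<and> LM N)"
  by (auto simp: LM_def)
lemma LM_add_mset[simp]: "LM (add_mset l M) = (lyndon l \<and> LM M)"
  by (auto simp: LM_def)

lemma finite_Q: "finite (Q A)"
proof -
  have "Q A \<subseteq> {S. LM S \<and> wt S \<subseteq># A} \<times> {u. mset u \<subseteq># A}"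
    by (auto simp: Q_def)
  then show ?thesis by (rule finite_subset) (intro finite_cartesian_product finite_FS_le finite_mset_eq)
qed

lemma finite_R: "finite (R A)"
proof -
  have "R A \<subseteq> {S. LM S \<and> wt S \<subseteq># A} \<times> {S. LM S \<and> wt S \<subseteq># A}"
    by (auto simp: R_def)
  then show ?thesis by (rule finite_subset) (intro finite_cartesian_product finite_FS_le)
qed

lemma G_rec: "G A = int (card (FS PO A)) - (\<Sum>i\<in>set_mset A. G (A - {#i#}))"
proof -
  let ?f = "\<lambda>p :: nat list multiset \<times> nat list. (-1::int) ^ length (snd p)"
  define Q0 where "Q0 = {p\<in>Q A. snd p = []}"
  define Q1 where "Q1 = {p\<in>Q A. snd p \<noteq> []}"
  have QU: "Q A = Q0 \<union> Q1" "Q0 \<inter> Q1 = {}" by (auto simp: Q0_def Q1_def)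
  have fQ0: "finite Q0" "finite Q1" using finite_Q by (auto simp: Q0_def Q1_def)
  have GA: "G A = sum ?f (Q A)" by (simp add: G_def case_prod_beta)
  have Q0e: "Q0 = (\<lambda>S. (S, [])) ` FS PO A"
    by (auto simp: Q0_def Q_def FS_def)
  have s0: "sum ?f Q0 = int (card (FS PO A))"
    unfolding Q0e by (subst sum.reindex) (auto simp: inj_on_def)
  let ?h = "\<lambda>i (p :: nat list multiset \<times> nat list). (fst p, i # snd p)"
  have Q1e: "Q1 = (\<Union>i\<in>set_mset A. ?h i ` Q (A - {#i#}))"
  proof (intro set_eqI iffI)
    fix p assume "p \<in> Q1"
    then obtain S i u where p: "p = (S, i # u)" "LM S" "PO S" "wt S + add_mset i (mset u) = A"
      by (auto simp: Q1_def Q_def neq_Nil_conv)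
    then have iA: "i \<in># A" by auto
    have "wt S + mset u = A - {#i#}" using p(4) by auto
    then show "p \<in> (\<Union>i\<in>set_mset A. ?h i ` Q (A - {#i#}))"
      using p iA by (auto simp: Q_def intro!: bexI[of _ i] image_eqI[of _ _ "(S,u)"])
  next
    fix p assume "p \<in> (\<Union>i\<in>set_mset A. ?h i ` Q (A - {#i#}))"
    then obtain i S u where p: "i \<in># A" "p = (S, i # u)" "LM S" "PO S" "wt S + mset u = A - {#i#}"
      by (auto simp: Q_def)
    then have "wt S + add_mset i (mset u) = A"
      by (metis add_mset_add_single insert_DiffM union_assoc union_mset_add_mset_right)
    then show "p \<in> Q1" using p by (auto simp: Q1_def Q_def)
  qed
  have s1: "sum ?f Q1 = - (\<Sum>i\<in>set_mset A. G (A - {#i#}))"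
  proof -
    have "sum ?f Q1 = (\<Sum>i\<in>set_mset A. sum ?f (?h i ` Q (A - {#i#})))"
      unfolding Q1e by (rule sum.UNION_disjoint) (auto simp: finite_Q)
    also have "\<dots> = (\<Sum>i\<in>set_mset A. - G (A - {#i#}))"
    proof (rule sum.cong[OF refl])
      fix i
      have "sum ?f (?h i ` Q (A - {#i#})) = sum (?f \<circ> ?h i) (Q (A - {#i#}))"
        by (rule sum.reindex) (auto simp: inj_on_def)
      also have "\<dots> = - G (A - {#i#})"
        by (simp add: G_def case_prod_beta sum_negf[symmetric])
      finally show "sum ?f (?h i ` Q (A - {#i#})) = - G (A - {#i#})" .
    qed
    also have "\<dots> = - (\<Sum>i\<in>set_mset A. G (A - {#i#}))" by (simp add: sum_negf)
    finally show ?thesis .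
  qed
  have "G A = sum ?f Q0 + sum ?f Q1" unfolding GA QU(1) by (rule sum.union_disjoint) (use fQ0 QU in auto)
  then show ?thesis using s0 s1 by simp
qed



lemma inv_sum_zero:
  fixes f :: "'a \<Rightarrow> int"
  assumes "finite X" "\<forall>x\<in>X. g x \<in> X" "\<forall>x\<in>X. g (g x) = x" "\<forall>x\<in>X. f (g x) = - f x"
  shows "sum f X = 0"
proof -
  have b: "bij_betw g X X"
    by (rule bij_betw_byWitness[where f' = g]) (use assms in auto)
  have "sum f X = sum (\<lambda>x. f (g x)) X" using sum.reindex_bij_betw[OF b, of f] by simp
  also have "\<dots> = - sum f X" using assms(4) by (simp add: sum_negf)
  finally show ?thesis by simp
qed

lemma size_wt_add_mset[simp]: "size (wt (add_mset l M)) = length l + size (wt M)"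
  by (simp add: wt_def)

lemma even_wt: "PV M \<Longrightarrow> even (size (wt M))"
  by (induction M) (auto simp: PV_def)

definition Tset :: "nat list multiset \<Rightarrow> nat list multiset \<Rightarrow> nat list set" where
  "Tset S M = {l. l \<in># S + M \<and> odd (length l)}"

definition iota :: "nat list multiset \<times> nat list multiset \<Rightarrow> nat list multiset \<times> nat list multiset" where
  "iota p = (let l = Max (Tset (fst p) (snd p)) in
     if l \<in># fst p then (fst p - {#l#}, add_mset l (snd p)) else (add_mset l (fst p), snd p - {#l#}))"

lemma finite_Tset: "finite (Tset S M)"
  by (rule finite_subset[of _ "set_mset (S + M)"]) (auto simp: Tset_def)

lemma iota_sum:
  assumes "Tset S M \<noteq> {}"
  shows "fst (iota (S,M)) + snd (iota (S,M)) = S + M"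
proof -
  let ?l = "Max (Tset S M)"
  have "?l \<in> Tset S M" using assms finite_Tset by (rule Max_in[rotated])
  then have l: "?l \<in># S + M" by (simp add: Tset_def)
  show ?thesis
  proof (cases "?l \<in># S")
    case True then show ?thesis by (simp add: iota_def Let_def)
  next
    case False
    then have "?l \<in># M" using l by simp
    then show ?thesis using False by (simp add: iota_def Let_def)
  qed
qed

lemma PO_count1:
  fixes S :: "nat list multiset"
  assumes "l \<in># S" "PO S"
  shows "count S l = 1"
proof -
  have "count S l \<le> 1" using assms(2) by (simp add: PO_def)
  moreover have "0 < count S l" using assms(1) by simp
  ultimately show ?thesis by linarith
qed

lemma PO_diff:
  fixes S :: "nat list multiset"
  assumes "PO S"
  shows "PO (S - {#l#})"
proof -
  have "count (S - {#l#}) x \<le> 1" for x using assms unfolding PO_def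
    by (metis count_diff diff_le_self le_trans)
  then show ?thesis using assms unfolding PO_def by (auto dest: in_diffD)
qed

lemma iota_simp: "iota (S,M) = (let l = Max (Tset S M) in
     if l \<in># S then (S - {#l#}, add_mset l M) else (add_mset l S, M - {#l#}))"
  by (simp add: iota_def Let_def)

lemma R_iota:
  assumes p: "(S,M) \<in> R A" and T: "Tset S M \<noteq> {}"
  shows "iota (S,M) \<in> R A \<and> Tset (fst (iota (S,M))) (snd (iota (S,M))) \<noteq> {}
    \<and> iota (iota (S,M)) = (S,M)
    \<and> (-1::int) ^ size (wt (snd (iota (S,M)))) = - ((-1) ^ size (wt M))"
proof -
  define l where "l = Max (Tset S M)"
  have "l \<in> Tset S M" unfolding l_def using T finite_Tset by (rule Max_in[rotated])
  then have l: "l \<in># S + M" "odd (length l)" by (auto simp: Tset_def)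
  have sum: "fst (iota (S,M)) + snd (iota (S,M)) = S + M" by (rule iota_sum[OF T])
  have TT: "Tset (fst (iota (S,M))) (snd (iota (S,M))) = Tset S M"
    unfolding Tset_def sum ..
  have pS: "LM S" "PO S" "LM M" "wt S + wt M = A" using p by (auto simp: R_def)
  have LMS: "LM (S + M)" using pS by simp
  show ?thesis
  proof (cases "l \<in># S")
    case True
    have io: "iota (S,M) = (S - {#l#}, add_mset l M)" using True
      unfolding iota_simp Let_def l_def[symmetric] by simp
    have c1: "count S l = 1" using True pS(2) by (rule PO_count1)
    have nin: "l \<notin># S - {#l#}" using c1 by (simp add: not_in_iff)
    have "LM (S - {#l#})" using pS(1) by (auto simp: LM_def dest: in_diffD)
    moreover have "PO (S - {#l#})" using pS(2) by (rule PO_diff)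
    moreover have "LM (add_mset l M)" using pS LMS l(1) by (auto simp: LM_def)
    moreover have "wt (S - {#l#}) + wt (add_mset l M) = A"
      using sum io pS(4) by (metis fst_conv snd_conv wt_add)
    ultimately have inR: "iota (S,M) \<in> R A" using io by (simp add: R_def)
    have TT': "Tset (S - {#l#}) (add_mset l M) = Tset S M" using TT io by simp
    have "iota (iota (S,M)) = iota (S - {#l#}, add_mset l M)" using io by simp
    also have "\<dots> = (add_mset l (S - {#l#}), add_mset l M - {#l#})"
      unfolding iota_simp Let_def TT' l_def[symmetric] using nin by simp
    also have "\<dots> = (S, M)" using True by simp
    finally have ii: "iota (iota (S,M)) = (S,M)" .
    have "(-1::int) ^ size (wt (snd (iota (S,M)))) = - ((-1) ^ size (wt M))"
      using io l(2) by (simp add: power_add)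
    then show ?thesis using inR ii TT T by simp
  next
    case False
    have lM: "l \<in># M" using l(1) False by simp
    have io: "iota (S,M) = (add_mset l S, M - {#l#})" using False
      unfolding iota_simp Let_def l_def[symmetric] by simp
    have "LM (add_mset l S)" using pS LMS l(1) by (auto simp: LM_def)
    moreover have "PO (add_mset l S)" using pS(2) l(2) False unfolding PO_def
      by (auto simp: not_in_iff)
    moreover have "LM (M - {#l#})" using pS(3) by (auto simp: LM_def dest: in_diffD)
    moreover have "wt (add_mset l S) + wt (M - {#l#}) = A"
      using sum io pS(4) by (metis fst_conv snd_conv wt_add)
    ultimately have inR: "iota (S,M) \<in> R A" using io by (simp add: R_def)
    have TT': "Tset (add_mset l S) (M - {#l#}) = Tset S M" using TT io by simp
    have "iota (iota (S,M)) = iota (add_mset l S, M - {#l#})" using io by simp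
    also have "\<dots> = (add_mset l S - {#l#}, add_mset l (M - {#l#}))"
      unfolding iota_simp Let_def TT' l_def[symmetric] by simp
    also have "\<dots> = (S, M)" using lM by simp
    finally have ii: "iota (iota (S,M)) = (S,M)" .
    have Meq: "M = add_mset l (M - {#l#})" using lM by simp
    have "size (wt M) = length l + size (wt (M - {#l#}))"
      by (subst Meq) simp
    then have "(-1::int) ^ size (wt (snd (iota (S,M)))) = - ((-1) ^ size (wt M))"
      using io l(2) by (simp add: power_add)
    then show ?thesis using inR ii TT T by simp
  qed
qed

lemma G_eq: "G A = int (card (FS PV A))"
proof -
  let ?s = "\<lambda>p :: nat list multiset \<times> nat list multiset. (-1::int) ^ size (wt (snd p))"
  let ?f = "\<lambda>p :: nat list multiset \<times> nat list. (-1::int) ^ length (snd p)"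
  have GA: "G A = sum ?f (Q A)" by (simp add: G_def case_prod_beta)
  have bij: "bij_betw (\<lambda>p. (fst p, fm (snd p))) (Q A) (R A)"
    by (rule bij_betw_byWitness[where f' = "\<lambda>p. (fst p, mk (snd p))"])
       (auto simp: Q_def R_def mk_fm fm_mk LM_fm wt_fm mset_mk)
  have "sum ?s (R A) = sum (\<lambda>p. ?s (fst p, fm (snd p))) (Q A)"
    using sum.reindex_bij_betw[OF bij, of ?s] by simp
  also have "\<dots> = sum ?f (Q A)"
    by (rule sum.cong) (auto simp: wt_fm)
  finally have GR: "G A = sum ?s (R A)" using GA by simp
  define R0 where "R0 = {p\<in>R A. Tset (fst p) (snd p) = {}}"
  define R1 where "R1 = {p\<in>R A. Tset (fst p) (snd p) \<noteq> {}}"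
  have RU: "R A = R0 \<union> R1" "R0 \<inter> R1 = {}" by (auto simp: R0_def R1_def)
  have fR: "finite R0" "finite R1" using finite_R by (auto simp: R0_def R1_def)
  have s1: "sum ?s R1 = 0"
  proof (rule inv_sum_zero[where g = iota])
    show "finite R1" by fact
    show "\<forall>x\<in>R1. iota x \<in> R1" using R_iota by (force simp: R1_def)
    show "\<forall>x\<in>R1. iota (iota x) = x" using R_iota by (force simp: R1_def)
    show "\<forall>x\<in>R1. ?s (iota x) = - ?s x" using R_iota by (force simp: R1_def)
  qed
  have R0e: "R0 = (\<lambda>M. ({#} :: nat list multiset, M)) ` FS PV A"
  proof (intro set_eqI iffI)
    fix p assume "p \<in> R0"
    then obtain S M where p: "p = (S,M)" "(S,M) \<in> R A" "Tset S M = {}" by (cases p) (auto simp: R0_def)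
    have "S = {#}"
    proof (rule ccontr)
      assume "S \<noteq> {#}"
      then obtain l where "l \<in># S" by (meson multiset_nonemptyE)
      then have "l \<in> Tset S M" using p(2) by (auto simp: R_def PO_def Tset_def)
      then show False using p(3) by simp
    qed
    moreover have "PV M" using p(2,3) unfolding PV_def Tset_def by auto
    ultimately show "p \<in> (\<lambda>M. ({#}, M)) ` FS PV A" using p(1,2) by (auto simp: R_def FS_def)
  next
    fix p assume "p \<in> (\<lambda>M. ({#} :: nat list multiset, M)) ` FS PV A"
    then show "p \<in> R0" by (auto simp: R0_def R_def FS_def PO_def PV_def Tset_def LM_def)
  qed
  have s0: "sum ?s R0 = int (card (FS PV A))"
  proof -
    have "sum ?s R0 = sum (?s \<circ> (\<lambda>M. ({#}, M))) (FS PV A)"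
      unfolding R0e by (rule sum.reindex) (auto simp: inj_on_def)
    also have "\<dots> = sum (\<lambda>_. 1) (FS PV A)"
      by (rule sum.cong) (auto simp: FS_def dest!: even_wt)
    finally show ?thesis by simp
  qed
  have "sum ?s (R A) = sum ?s R0 + sum ?s R1" unfolding RU(1) by (rule sum.union_disjoint) (use fR RU in auto)
  then show ?thesis using GR s0 s1 by simp
qed



lemma wt_add_mset[simp]: "wt (add_mset l M) = mset l + wt M"
  by (simp add: wt_def)

lemma FS_PE: "FS PE A = FS PV A \<union> (\<Union>i\<in>set_mset A. add_mset [i] ` FS PV (A - {#i#}))"
proof (intro set_eqI iffI)
  fix M assume M: "M \<in> FS PE A"
  let ?O = "filter_mset (\<lambda>l. odd (length l)) M"
  have pM: "LM M" "wt M = A" "PE M" using M by (auto simp: FS_def)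
  have "size ?O \<le> 1" using pM(3) by (simp add: PE_def)
  then consider "size ?O = 0" | "size ?O = 1" by linarith
  then show "M \<in> FS PV A \<union> (\<Union>i\<in>set_mset A. add_mset [i] ` FS PV (A - {#i#}))"
  proof cases
    case 1
    then have "PV M" unfolding PV_def by (auto simp: filter_mset_eq_mempty_iff)
    then show ?thesis using pM by (simp add: FS_def)
  next
    case 2
    then obtain l where Ol: "?O = {#l#}" by (meson size_1_singleton_mset)
    have "l \<in># ?O" using Ol by simp
    then have lM: "l \<in># M" "odd (length l)" by simp_all
    then have "length l = 1" using pM(3) by (simp add: PE_def)
    then obtain i where li: "l = [i]" by (metis length_0_conv length_Suc_conv One_nat_def)
    define M' where "M' = M - {#l#}"
    have Meq: "M = add_mset l M'" using lM M'_def by simp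
    have "filter_mset (\<lambda>l. odd (length l)) M' = {#}"
      using Ol lM(2) unfolding Meq by (simp split: if_splits)
    then have PV: "PV M'" unfolding PV_def by (auto simp: filter_mset_eq_mempty_iff)
    have wA: "add_mset i (wt M') = A" using pM(2) Meq li by simp
    then have iA: "i \<in># A" by auto
    have "wt M' = A - {#i#}" using wA by auto
    moreover have "LM M'" using pM(1) Meq by simp
    ultimately have "M' \<in> FS PV (A - {#i#})" using PV by (simp add: FS_def)
    then show ?thesis using iA Meq li by blast
  qed
next
  fix M assume "M \<in> FS PV A \<union> (\<Union>i\<in>set_mset A. add_mset [i] ` FS PV (A - {#i#}))"
  then consider "M \<in> FS PV A" | i M' where "i \<in># A" "M = add_mset [i] M'" "M' \<in> FS PV (A - {#i#})"
    by blast
  then show "M \<in> FS PE A"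
  proof cases
    case 1
    have PV: "PV M" using 1 by (simp add: FS_def)
    then have f: "filter_mset (\<lambda>l. odd (length l)) M = {#}" by (auto simp: PV_def)
    have "PE M" unfolding PE_def using PV by (auto simp: PV_def f)
    then show ?thesis using 1 by (simp add: FS_def)
  next
    case 2
    have f: "filter_mset (\<lambda>l. odd (length l)) M' = {#}"
      using 2 by (auto simp: FS_def PV_def filter_mset_eq_mempty_iff)
    have "wt M = A" using 2 by (auto simp: FS_def)
    moreover have "LM M" using 2 lyndon_single by (auto simp: FS_def)
    moreover have "PE M" using 2 f by (auto simp: FS_def PE_def PV_def)
    ultimately show ?thesis by (simp add: FS_def)
  qed
qed

lemma card_PE: "card (FS PE A) = card (FS PV A) + (\<Sum>i\<in>set_mset A. card (FS PV (A - {#i#})))"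
proof -
  let ?U = "\<Union>i\<in>set_mset A. add_mset [i] ` FS PV (A - {#i#})"
  have d1: "FS PV A \<inter> ?U = {}"
  proof (rule ccontr)
    assume "FS PV A \<inter> ?U \<noteq> {}"
    then obtain M i M' where "M \<in> FS PV A" "M = add_mset [i] M'" by blast
    then have "[i] \<in># M" "PV M" by (simp_all add: FS_def)
    then show False unfolding PV_def by fastforce
  qed
  have fU: "finite ?U" by (intro finite_UN_I finite_imageI finite_FS) simp
  have "card ?U = (\<Sum>i\<in>set_mset A. card (add_mset [i] ` FS PV (A - {#i#})))"
  proof (rule card_UN_disjoint)
    show "\<forall>i::nat\<in>set_mset A. \<forall>j\<in>set_mset A. i \<noteq> j \<longrightarrow>
      add_mset [i] ` FS PV (A - {#i#}) \<inter> add_mset [j] ` FS PV (A - {#j#}) = {}"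
    proof (intro ballI impI)
      fix i j :: nat assume "i \<noteq> j"
      show "add_mset [i] ` FS PV (A - {#i#}) \<inter> add_mset [j] ` FS PV (A - {#j#}) = {}"
      proof (rule ccontr)
        assume "\<not> ?thesis"
        then obtain M M' where MM: "M \<in> FS PV (A - {#i#})" "M' \<in> FS PV (A - {#j#})"
          "add_mset [i] M = add_mset [j] M'" by blast
        have "[i] \<in># add_mset [j] M'" using MM(3) by (metis union_single_eq_member)
        then have "[i] \<in># M'" using \<open>i \<noteq> j\<close> by simp
        moreover have "PV M'" using MM(2) by (simp add: FS_def)
        ultimately show False unfolding PV_def by fastforce
      qed
    qed
    show "finite (set_mset A)" by simp
    show "\<forall>i\<in>set_mset A. finite (add_mset [i] ` FS PV (A - {#i#}))"
      using finite_FS by blast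
  qed
  also have "\<dots> = (\<Sum>i\<in>set_mset A. card (FS PV (A - {#i#})))"
    by (rule sum.cong[OF refl]) (rule card_image, simp add: inj_on_def)
  finally have cU: "card ?U = (\<Sum>i\<in>set_mset A. card (FS PV (A - {#i#})))" .
  have "card (FS PE A) = card (FS PV A \<union> ?U)" by (simp only: FS_PE)
  also have "\<dots> = card (FS PV A) + card ?U"
    by (rule card_Un_disjoint[OF finite_FS fU d1])
  finally show ?thesis using cU by simp
qed

lemma main_mset: "card (FS PO A) = card (FS PE A)"
proof -
  have "int (card (FS PO A)) = G A + (\<Sum>i\<in>set_mset A. G (A - {#i#}))"
    using G_rec[of A] by simp
  also have "\<dots> = int (card (FS PV A)) + (\<Sum>i\<in>set_mset A. int (card (FS PV (A - {#i#}))))"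
    by (simp add: G_eq)
  also have "\<dots> = int (card (FS PE A))" by (simp add: card_PE)
  finally show ?thesis by simp
qed


lemma distinct_count_le1: "distinct L \<longleftrightarrow> (\<forall>l. count (mset L) l \<le> 1)"
proof (induction L)
  case Nil then show ?case by simp
next
  case (Cons a L)
  show ?case
  proof
    assume "distinct (a # L)"
    then show "\<forall>l. count (mset (a # L)) l \<le> 1" using Cons.IH by (simp add: not_in_iff)
  next
    assume h: "\<forall>l. count (mset (a # L)) l \<le> 1"
    have "count (mset L) a = 0" using h[rule_format, of a] by simp
    moreover have "\<forall>l. count (mset L) l \<le> 1"
    proof
      fix l
      have "count (mset L) l \<le> count (mset (a # L)) l" by simp
      then show "count (mset L) l \<le> 1" using h by (meson le_trans)
    qed
    ultimately show "distinct (a # L)" using Cons.IH by (simp add: count_eq_zero_iff)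
  qed
qed

lemma weight_iff:
  fixes \<alpha> :: "nat list"
  defines "A \<equiv> (\<Sum>i<length \<alpha>. replicate_mset (\<alpha>!i) i)"
  shows "(w \<in> words (length \<alpha>) (sum_list \<alpha>) \<and> has_weight \<alpha> w) \<longleftrightarrow> mset w = A"
proof -
  have cA: "count A j = (if j < length \<alpha> then \<alpha>!j else 0)" for j
    by (simp add: A_def count_sum)
  have sA: "size A = sum_list \<alpha>"
    by (simp add: A_def sum_list_sum_nth atLeast0LessThan)
  show ?thesis
  proof
    assume h: "w \<in> words (length \<alpha>) (sum_list \<alpha>) \<and> has_weight \<alpha> w"
    show "mset w = A"
    proof (rule multiset_eqI)
      fix j
      show "count (mset w) j = count A j"
      proof (cases "j < length \<alpha>")
        case True then show ?thesis using h by (simp add: cA has_weight_def count_mset)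
      next
        case False
        then have "j \<notin> set w" using h by (auto simp: words_def)
        then show ?thesis using False by (simp add: cA not_in_iff[symmetric])
      qed
    qed
  next
    assume h: "mset w = A"
    have "set w \<subseteq> {..<length \<alpha>}"
    proof
      fix x assume "x \<in> set w"
      then have "0 < count (mset w) x" by simp
      then show "x \<in> {..<length \<alpha>}" using h cA[of x] by (simp split: if_splits)
    qed
    moreover have "length w = sum_list \<alpha>" using h sA by (metis size_mset)
    moreover have "has_weight \<alpha> w" using h cA by (simp add: has_weight_def count_mset[symmetric])
    ultimately show "w \<in> words (length \<alpha>) (sum_list \<alpha>) \<and> has_weight \<alpha> w"
      by (simp add: words_def)
  qed
qed

theorem proposition3p2:
  fixes n :: nat and \<alpha> :: "nat list"
  assumes "n \<ge> 1"
    and "\<forall>a\<in>set \<alpha>. a > 0"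
    and "sum_list \<alpha> = n"
  shows "card {w \<in> words_o (length \<alpha>) n. has_weight \<alpha> w}
       = card {w \<in> words_e (length \<alpha>) n. has_weight \<alpha> w}"
proof -
  define A where "A = (\<Sum>i<length \<alpha>. replicate_mset (\<alpha>!i) i)"
  have wi: "(w \<in> words (length \<alpha>) n \<and> has_weight \<alpha> w) \<longleftrightarrow> mset w = A" for w
    using weight_iff[of w \<alpha>] assms(3) by (simp add: A_def)
  have "{w \<in> words_o (length \<alpha>) n. has_weight \<alpha> w} = {w. mset w = A \<and> PO (fm w)}"
  proof -
    have "PO (fm w) \<longleftrightarrow> (\<forall>l\<in>set (lyndon_factors w). odd (length l)) \<and> distinct (lyndon_factors w)" for w
      by (simp add: PO_def fm_def distinct_count_le1)
    then show ?thesis using wi unfolding words_o_def by blast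
  qed
  moreover have "{w \<in> words_e (length \<alpha>) n. has_weight \<alpha> w} = {w. mset w = A \<and> PE (fm w)}"
  proof -
    have "PE (fm w) \<longleftrightarrow> (\<forall>l\<in>set (lyndon_factors w). odd (length l) \<longrightarrow> length l = 1) \<and>
       length (filter (\<lambda>l. odd (length l)) (lyndon_factors w)) \<le> 1" for w
      by (simp add: PE_def fm_def mset_filter[symmetric] del: mset_filter)
    then show ?thesis using wi unfolding words_e_def by blast
  qed
  ultimately show ?thesis using main_mset card_FS by simp
qed

end
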